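(* If the semigroup $\mathbb NA$ is scored, then for every $\boldsymbol\alpha\in\mathbb C^d$ the equivalence class $[\boldsymbol\alpha]$ is extreme.
   Context: $A\subset\mathbb Z^d$ is a finite set generating the group $\mathbb Z^d$; $\mathbb NA$ its monoid. For a facet $\sigma$ of the cone $\mathbb R_{\ge0}A$, $F_\sigma$ is the unique linear form (extended $\mathbb C$-linearly) with $F_\sigma(\mathbb R_{\ge0}A)\ge0$, $F_\sigma(\sigma)=0$, $F_\sigma(\mathbb Z^d)=\mathbb Z$. $\mathbb NA$ is scored if $\mathbb NA=\bigcap_{\sigma\text{ facet}}\{\mathbf a\in\mathbb Z^d:F_\sigma(\mathbf a)\in F_\sigma(\mathbb NA)\}$. For a face $\tau$, $E_\tau(\boldsymbol\alpha)=\{\boldsymbol\lambda\in\mathbb C(A\cap\tau)/\mathbb Z(A\cap\tau):\boldsymbol\alpha-\boldsymbol\lambda\in\mathbb NA+\mathbb Z(A\cap\tau)\}$, called full if it has $[\mathbb Q(A\cap\tau)\cap\mathbb Z^d:\mathbb Z(A\cap\tau)]$ elements; $\boldsymbol\alpha\sim\boldsymbol\beta$ iff $E_\tau(\boldsymbol\alpha)=E_\tau(\boldsymbol\beta)$ for all faces, $[\boldsymbol\alpha]$ the class. $\mathcal F_+(\boldsymbol\alpha)=\{\sigma:F_\sigma(\boldsymbol\alpha)\in F_\sigma(\mathbb NA)\}$. ${\rm Face}(\boldsymbol\alpha)$ is the set of faces $\tau$ such that $\boldsymbol\alpha-\boldsymbol\lambda\in\mathbb Z^d$ for some $\boldsymbol\lambda\in\mathbb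 C(A\cap\tau)$ and every facet containing $\tau$ lies in $\mathcal F_+(\boldsymbol\alpha)$. $[\boldsymbol\alpha]$ is extreme if $E_\tau(\boldsymbol\alpha)$ is full for all $\tau\in{\rm Face}(\boldsymbol\alpha)$ and empty for all $\tau\notin{\rm Face}(\boldsymbol\alpha)$. *)

theory Defs
  imports "HOL-Analysis.Analysis"
begin

text \<open>Ambient lattice Z^d is int^'d; the dimension d is the cardinality of the finite type 'd.\<close>

definition rvec :: "int^'d \<Rightarrow> real^'d" where
  "rvec z = (\<chi> i. real_of_int (z$i))"

definition cvec :: "int^'d \<Rightarrow> complex^'d" where
  "cvec z = (\<chi> i. complex_of_int (z$i))"

definition monoidN :: "(int^'d) set \<Rightarrow> (int^'d) set" where
  "monoidN A = {\<Sum>a\<in>A. int (n a) *s a | n. True}"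

definition zspan :: "(int^'d) set \<Rightarrow> (int^'d) set" where
  "zspan B = {\<Sum>a\<in>B. k a *s a | k. True}"

definition cspan :: "(int^'d) set \<Rightarrow> (complex^'d) set" where
  "cspan B = {\<Sum>a\<in>B. c a *s cvec a | c. True}"

definition qspan :: "(int^'d) set \<Rightarrow> (real^'d) set" where
  "qspan B = {\<Sum>a\<in>B. q a *\<^sub>R rvec a | q. \<forall>a\<in>B. q a \<in> \<rat>}"

definition cone_of :: "(int^'d) set \<Rightarrow> (real^'d) set" where
  "cone_of A = {\<Sum>a\<in>A. c a *\<^sub>R rvec a | c. \<forall>a\<in>A. 0 \<le> c a}"

definition faces :: "(int^'d) set \<Rightarrow> (real^'d) set set" where
  "faces A = {\<tau>. \<tau> face_of cone_of A \<and> \<tau> \<noteq> {}}"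

definition facets :: "(int^'d) set \<Rightarrow> (real^'d) set set" where
  "facets A = {\<sigma>. \<sigma> face_of cone_of A \<and> \<sigma> \<noteq> {} \<and>
                  aff_dim \<sigma> = aff_dim (cone_of A) - 1}"

definition facet_form :: "(int^'d) set \<Rightarrow> (real^'d) set \<Rightarrow> real^'d" where
  "facet_form A \<sigma> = (THE w. (\<forall>x\<in>cone_of A. 0 \<le> w \<bullet> x) \<and> (\<forall>x\<in>\<sigma>. w \<bullet> x = 0)
                        \<and> (\<lambda>z. w \<bullet> rvec z) ` UNIV = \<int>)"

definition Fc :: "(int^'d) set \<Rightarrow> (real^'d) set \<Rightarrow> complex^'d \<Rightarrow> complex" where
  "Fc A \<sigma> \<alpha> = (\<Sum>i\<in>UNIV. complex_of_real (facet_form A \<sigma> $ i) * \<alpha> $ i)"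

definition scored :: "(int^'d) set \<Rightarrow> bool" where
  "scored A \<longleftrightarrow> monoidN A =
     {z. \<forall>\<sigma>\<in>facets A. Fc A \<sigma> (cvec z) \<in> (\<lambda>a. Fc A \<sigma> (cvec a)) ` monoidN A}"

definition Fplus :: "(int^'d) set \<Rightarrow> complex^'d \<Rightarrow> (real^'d) set set" where
  "Fplus A \<alpha> = {\<sigma>\<in>facets A. Fc A \<sigma> \<alpha> \<in> (\<lambda>a. Fc A \<sigma> (cvec a)) ` monoidN A}"

definition Atau :: "(int^'d) set \<Rightarrow> (real^'d) set \<Rightarrow> (int^'d) set" where
  "Atau A \<tau> = {a\<in>A. rvec a \<in> \<tau>}"

text \<open>The index [Q(A\<inter>tau) \<inter> Z^d : Z(A\<inter>tau)], as the number of cosets.\<close>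
definition lattice_index :: "(int^'d) set \<Rightarrow> (real^'d) set \<Rightarrow> nat" where
  "lattice_index A \<tau> =
     card {(\<lambda>x. y + x) ` zspan (Atau A \<tau>) | y. rvec y \<in> qspan (Atau A \<tau>)}"

definition Eset :: "(int^'d) set \<Rightarrow> (real^'d) set \<Rightarrow> complex^'d \<Rightarrow> (complex^'d) set set" where
  "Eset A \<tau> \<alpha> = {(\<lambda>x. l + cvec x) ` zspan (Atau A \<tau>) | l.
       l \<in> cspan (Atau A \<tau>) \<and>
       \<alpha> - l \<in> cvec ` {m + z | m z. m \<in> monoidN A \<and> z \<in> zspan (Atau A \<tau>)}}"

definition full :: "(int^'d) set \<Rightarrow> (real^'d) set \<Rightarrow> complex^'d \<Rightarrow> bool" where
  "full A \<tau> \<alpha> \<longleftrightarrow> card (Eset A \<tau> \<alpha>) = lattice_index A \<tau>"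

definition Face :: "(int^'d) set \<Rightarrow> complex^'d \<Rightarrow> (real^'d) set set" where
  "Face A \<alpha> = {\<tau>\<in>faces A. (\<exists>l\<in>cspan (Atau A \<tau>). \<alpha> - l \<in> range cvec) \<and>
                     (\<forall>\<sigma>\<in>facets A. \<tau> \<subseteq> \<sigma> \<longrightarrow> \<sigma> \<in> Fplus A \<alpha>)}"

text \<open>[alpha] is extreme (the defining condition is phrased via the representative alpha).\<close>
definition extreme :: "(int^'d) set \<Rightarrow> complex^'d \<Rightarrow> bool" where
  "extreme A \<alpha> \<longleftrightarrow> (\<forall>\<tau>\<in>Face A \<alpha>. full A \<tau> \<alpha>) \<and>
                     (\<forall>\<tau>\<in>faces A - Face A \<alpha>. Eset A \<tau> \<alpha> = {})"

end

theory Submission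
  imports Defs
begin


lemma rvec_nth [simp]: "rvec z $ i = real_of_int (z $ i)"
  by (simp add: rvec_def)
lemma cvec_nth [simp]: "cvec z $ i = complex_of_int (z $ i)"
  by (simp add: cvec_def)
lemma rvec_add: "rvec (x + y) = rvec x + rvec y"
  by (simp add: vec_eq_iff)
lemma rvec_diff: "rvec (x - y) = rvec x - rvec y"
  by (simp add: vec_eq_iff)
lemma rvec_minus: "rvec (- x) = - rvec x"
  by (simp add: vec_eq_iff)
lemma rvec_zero [simp]: "rvec 0 = 0"
  by (simp add: vec_eq_iff)
lemma rvec_smult: "rvec (k *s x) = of_int k *\<^sub>R rvec x"
  by (simp add: vec_eq_iff)
lemma rvec_sum: "rvec (sum f S) = (\<Sum>x\<in>S. rvec (f x))"
  by (induction S rule: infinite_finite_induct) (auto simp: rvec_add)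
lemma rvec_inj: "rvec x = rvec y \<longleftrightarrow> x = y"
  by (simp add: vec_eq_iff)
lemma cvec_add: "cvec (x + y) = cvec x + cvec y"
  by (simp add: vec_eq_iff)
lemma cvec_diff: "cvec (x - y) = cvec x - cvec y"
  by (simp add: vec_eq_iff)
lemma cvec_minus: "cvec (- x) = - cvec x"
  by (simp add: vec_eq_iff)
lemma cvec_zero [simp]: "cvec 0 = 0"
  by (simp add: vec_eq_iff)
lemma cvec_smult: "cvec (k *s x) = of_int k *s cvec x"
  by (simp add: vec_eq_iff)
lemma cvec_sum: "cvec (sum f S) = (\<Sum>x\<in>S. cvec (f x))"
  by (induction S rule: infinite_finite_induct) (auto simp: cvec_add)
lemma cvec_inj: "cvec x = cvec y \<longleftrightarrow> x = y"
  by (simp add: vec_eq_iff)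

lemma inner_rvec: "w \<bullet> rvec z = (\<Sum>i\<in>UNIV. w $ i * real_of_int (z $ i))"
  by (simp add: inner_vec_def)

lemma Fc_cvec: "Fc A \<sigma> (cvec z) = complex_of_real (facet_form A \<sigma> \<bullet> rvec z)"
  by (simp add: Fc_def inner_rvec)

lemma Fc_add: "Fc A \<sigma> (x + y) = Fc A \<sigma> x + Fc A \<sigma> y"
  by (simp add: Fc_def distrib_left sum.distrib)
lemma Fc_diff: "Fc A \<sigma> (x - y) = Fc A \<sigma> x - Fc A \<sigma> y"
  by (simp add: Fc_def right_diff_distrib sum_subtractf)
lemma Fc_scale: "Fc A \<sigma> (c *s x) = c * Fc A \<sigma> x"
  by (simp add: Fc_def sum_distrib_left algebra_simps)
lemma Fc_zero [simp]: "Fc A \<sigma> 0 = 0"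
  by (simp add: Fc_def)
lemma Fc_sum: "Fc A \<sigma> (sum f S) = (\<Sum>x\<in>S. Fc A \<sigma> (f x))"
  by (induction S rule: infinite_finite_induct) (auto simp: Fc_add)

lemma monoidN_0: "0 \<in> monoidN A"
  unfolding monoidN_def by (rule CollectI, rule exI[of _ "\<lambda>_. 0"]) simp
lemma monoidN_add: "x \<in> monoidN A \<Longrightarrow> y \<in> monoidN A \<Longrightarrow> x + y \<in> monoidN A"
  unfolding monoidN_def
  apply clarify
  subgoal for n m by (intro exI[of _ "\<lambda>a. n a + m a"] conjI) (simp add: sum.distrib vector_sadd_rdistrib)
  done
lemma monoidN_mult: "x \<in> monoidN A \<Longrightarrow> int k *s x \<in> monoidN A"
  by (induction k) (auto simp: monoidN_0 vector_sadd_rdistrib intro: monoidN_add)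
lemma monoidN_gen: assumes "finite A" "a \<in> A" shows "a \<in> monoidN A"
proof -
  have "(\<Sum>b\<in>A. int (if b = a then 1 else 0) *s b) = (\<Sum>b\<in>A. if b = a then b else 0)"
    by (rule sum.cong) auto
  also have "\<dots> = a" using assms by (simp add: sum.delta)
  finally show ?thesis unfolding monoidN_def
    by (intro CollectI exI[of _ "\<lambda>b. if b = a then 1 else 0"]) simp
qed

lemma zspan_0: "0 \<in> zspan B"
  unfolding zspan_def by (rule CollectI, rule exI[of _ "\<lambda>_. 0"]) simp
lemma zspan_add: "x \<in> zspan B \<Longrightarrow> y \<in> zspan B \<Longrightarrow> x + y \<in> zspan B"
  unfolding zspan_def
  apply clarify
  subgoal for n m by (intro exI[of _ "\<lambda>a. n a + m a"] conjI) (simp add: sum.distrib vector_sadd_rdistrib)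
  done
lemma zspan_smult: "x \<in> zspan B \<Longrightarrow> k *s x \<in> zspan B"
  unfolding zspan_def
  apply clarify
  subgoal for n by (intro exI[of _ "\<lambda>a. k * n a"] conjI) (simp add: vec_eq_iff sum_distrib_left mult.assoc)
  done
lemma zspan_minus: "x \<in> zspan B \<Longrightarrow> - x \<in> zspan B"
  using zspan_smult[of x B "-1"] by (simp add: vector_sneg_minus1[symmetric])
lemma zspan_diff: "x \<in> zspan B \<Longrightarrow> y \<in> zspan B \<Longrightarrow> x - y \<in> zspan B"
  using zspan_add[of x B "-y"] zspan_minus by auto

lemma cspan_0: "0 \<in> cspan B"
  unfolding cspan_def by (rule CollectI, rule exI[of _ "\<lambda>_. 0"]) simp
lemma cspan_add: "x \<in> cspan B \<Longrightarrow> y \<in> cspan B \<Longrightarrow> x + y \<in> cspan B"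
  unfolding cspan_def
  apply clarify
  subgoal for n m by (intro exI[of _ "\<lambda>a. n a + m a"] conjI) (simp add: sum.distrib vector_sadd_rdistrib)
  done
lemma cspan_smult: "x \<in> cspan B \<Longrightarrow> k *s x \<in> cspan B"
  unfolding cspan_def
  apply clarify
  subgoal for n by (intro exI[of _ "\<lambda>a. k * n a"] conjI) (simp add: vec_eq_iff sum_distrib_left mult.assoc)
  done
lemma cspan_diff: "x \<in> cspan B \<Longrightarrow> y \<in> cspan B \<Longrightarrow> x - y \<in> cspan B"
  using cspan_add[of x B "(-1) *s y"] cspan_smult[of y B "-1"] by (simp add: vector_sneg_minus1[symmetric])



lemma cone_of_cc: "convex_cone (cone_of A)"
  unfolding convex_cone_iff
proof (intro conjI ballI allI impI)
  show "0 \<in> cone_of A" unfolding cone_of_def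
    by (intro CollectI exI[of _ "\<lambda>_. 0"]) simp
  fix x y assume "x \<in> cone_of A" "y \<in> cone_of A"
  then obtain c d where c: "x = (\<Sum>a\<in>A. c a *\<^sub>R rvec a)" "\<forall>a\<in>A. 0 \<le> c a"
     and d: "y = (\<Sum>a\<in>A. d a *\<^sub>R rvec a)" "\<forall>a\<in>A. 0 \<le> d a"
    unfolding cone_of_def by blast
  show "x + y \<in> cone_of A" unfolding cone_of_def
    by (intro CollectI exI[of _ "\<lambda>a. c a + d a"]) (use c d in \<open>auto simp: sum.distrib scaleR_add_left\<close>)
next
  fix x and t :: real assume "x \<in> cone_of A" "0 \<le> t"
  then obtain c where c: "x = (\<Sum>a\<in>A. c a *\<^sub>R rvec a)" "\<forall>a\<in>A. 0 \<le> c a"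
    unfolding cone_of_def by blast
  show "t *\<^sub>R x \<in> cone_of A" unfolding cone_of_def
    by (intro CollectI exI[of _ "\<lambda>a. t * c a"]) (use c \<open>0 \<le> t\<close> in \<open>auto simp: scaleR_sum_right\<close>)
qed

lemma cone_of_0: "0 \<in> cone_of A"
  using cone_of_cc convex_cone_contains_0 by blast
lemma cone_of_add: "x \<in> cone_of A \<Longrightarrow> y \<in> cone_of A \<Longrightarrow> x + y \<in> cone_of A"
  using cone_of_cc convex_cone_add by blast
lemma cone_of_scale: "x \<in> cone_of A \<Longrightarrow> 0 \<le> t \<Longrightarrow> t *\<^sub>R x \<in> cone_of A"
  using cone_of_cc convex_cone_scaleR by blast

lemma cone_of_gen: assumes "finite A" "a \<in> A" shows "rvec a \<in> cone_of A"
proof -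
  have "(\<Sum>b\<in>A. (if b = a then 1 else 0) *\<^sub>R rvec b) = (\<Sum>b\<in>A. if b = a then rvec b else 0)"
    by (rule sum.cong) auto
  also have "\<dots> = rvec a" using assms by simp
  finally show ?thesis unfolding cone_of_def
    by (intro CollectI exI[of _ "\<lambda>b. if b = a then 1 else 0"]) auto
qed

lemma cone_of_hull: assumes "finite A" shows "cone_of A = convex_cone hull (rvec ` A)"
proof
  show "convex_cone hull rvec ` A \<subseteq> cone_of A"
    by (rule hull_minimal) (use assms cone_of_gen cone_of_cc in auto)
  show "cone_of A \<subseteq> convex_cone hull rvec ` A"
  proof
    fix x assume "x \<in> cone_of A"
    then obtain c where c: "x = (\<Sum>a\<in>A. c a *\<^sub>R rvec a)" "\<forall>a\<in>A. 0 \<le> c a"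
      unfolding cone_of_def by blast
    have "(\<Sum>a\<in>S. c a *\<^sub>R rvec a) \<in> convex_cone hull rvec ` A" if "S \<subseteq> A" for S
      using finite_subset[OF that assms] that
    proof (induction S)
      case empty then show ?case by (simp add: convex_cone_hull_contains_0)
    next
      case (insert a S)
      then show ?case
        using convex_cone_hull_add[OF convex_cone_hull_mul[OF hull_inc[of "rvec a" "rvec ` A"], of "c a"] insert.IH] c
        by auto
    qed
    then show "x \<in> convex_cone hull rvec ` A" using c by blast
  qed
qed

lemma cone_of_polyhedron: "finite A \<Longrightarrow> polyhedron (cone_of A)"
  by (simp add: cone_of_hull polyhedron_convex_cone_hull)

section \<open>Faces of convex cones\<close>

lemma face_seg:
  assumes "T face_of S" "a \<in> S" "b \<in> S" "a \<noteq> b" "0 < u" "u < 1" "(1 - u) *\<^sub>R a + u *\<^sub>R b \<in> T"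
  shows "a \<in> T \<and> b \<in> T"
  using assms unfolding face_of_def in_segment by blast

lemma cc_face_0:
  assumes "convex_cone S" "T face_of S" "T \<noteq> {}"
  shows "0 \<in> T"
proof -
  obtain y where y: "y \<in> T" using assms by blast
  show ?thesis
  proof (cases "y = 0")
    case True then show ?thesis using y by simp
  next
    case False
    have "y \<in> S" using y assms face_of_imp_subset by blast
    then have "2 *\<^sub>R y \<in> S" using convex_cone_scaleR[OF assms(1), of 2 y] by auto
    moreover have "(1 - 1/2) *\<^sub>R 0 + (1/2) *\<^sub>R (2 *\<^sub>R y) = y" by simp
    ultimately show ?thesis
      using face_seg[OF assms(2), of 0 "2 *\<^sub>R y" "1/2"] y False convex_cone_contains_0[OF assms(1)]
      by auto
  qed
qed

lemma cc_face_scale: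
  assumes "convex_cone S" "T face_of S" "T \<noteq> {}" "0 < c" "x \<in> S" "c *\<^sub>R x \<in> T"
  shows "x \<in> T"
proof -
  consider "x = 0" | "c = 1" | "x \<noteq> 0" "c < 1" | "x \<noteq> 0" "c > 1" by linarith
  then show ?thesis
  proof cases
    case 1 then show ?thesis using cc_face_0 assms by blast
  next
    case 2 then show ?thesis using assms by simp
  next
    case 3
    have "(1 - c) *\<^sub>R 0 + c *\<^sub>R x = c *\<^sub>R x" by simp
    then show ?thesis
      using face_seg[OF assms(2), of 0 x c] 3 assms convex_cone_contains_0[OF assms(1)] by auto
  next
    case 4
    have "(2*c - 1) *\<^sub>R x \<in> S" using 4 assms convex_cone_scaleR[OF assms(1), of "2*c - 1" x] by auto
    moreover have "x \<noteq> (2*c - 1) *\<^sub>R x"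
    proof
      assume h: "x = (2*c - 1) *\<^sub>R x"
      have "(2*c - 2) *\<^sub>R x = (2*c - 1) *\<^sub>R x - x" by (simp add: algebra_simps scaleR_2)
      also have "\<dots> = 0" using h by simp
      finally show False using 4 by simp
    qed
    moreover have "(1 - 1/2) *\<^sub>R x + (1/2) *\<^sub>R ((2*c - 1) *\<^sub>R x) = c *\<^sub>R x"
      by (simp add: algebra_simps)
    ultimately show ?thesis
      using face_seg[OF assms(2), of x "(2*c - 1) *\<^sub>R x" "1/2"] assms by auto
  qed
qed

lemma cc_face_add:
  assumes "convex_cone S" "T face_of S" "T \<noteq> {}" "u \<in> S" "v \<in> S" "u + v \<in> T"
  shows "u \<in> T"
proof (cases "u = v")
  case True
  then have "2 *\<^sub>R u \<in> T" using assms by (simp add: scaleR_2)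
  then show ?thesis using cc_face_scale[OF assms(1-3), of 2 u] assms by simp
next
  case False
  have "2 *\<^sub>R u \<in> S" "2 *\<^sub>R v \<in> S" using assms convex_cone_scaleR[OF assms(1), of 2] by auto
  moreover have "2 *\<^sub>R u \<noteq> 2 *\<^sub>R v" using False by simp
  moreover have "(1 - 1/2) *\<^sub>R (2 *\<^sub>R u) + (1/2) *\<^sub>R (2 *\<^sub>R v) = u + v"
    by (simp add: algebra_simps)
  ultimately have "2 *\<^sub>R u \<in> T"
    using face_seg[OF assms(2), of "2 *\<^sub>R u" "2 *\<^sub>R v" "1/2"] assms by auto
  then show ?thesis using cc_face_scale[OF assms(1-3), of 2 u] assms by simp
qed

lemma cone_face_gen:
  assumes "finite A" "\<tau> face_of cone_of A" "\<tau> \<noteq> {}" "\<forall>a\<in>A. 0 \<le> c a"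
    "(\<Sum>a\<in>A. c a *\<^sub>R rvec a) \<in> \<tau>" "a0 \<in> A" "0 < c a0"
  shows "rvec a0 \<in> \<tau>"
proof -
  have s: "(\<Sum>a\<in>A. c a *\<^sub>R rvec a) = c a0 *\<^sub>R rvec a0 + (\<Sum>a\<in>A - {a0}. c a *\<^sub>R rvec a)"
    using assms by (simp add: sum.remove)
  have r: "(\<Sum>a\<in>A - {a0}. c a *\<^sub>R rvec a) \<in> cone_of A"
    unfolding cone_of_def
    by (intro CollectI exI[of _ "\<lambda>a. if a = a0 then 0 else c a"])
       (use assms in \<open>auto simp: sum.remove intro!: sum.cong\<close>)
  have "c a0 *\<^sub>R rvec a0 \<in> cone_of A"
    using assms cone_of_gen[OF assms(1,6)] cone_of_scale[of "rvec a0" A "c a0"] by auto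
  then have "c a0 *\<^sub>R rvec a0 \<in> \<tau>"
    using cc_face_add[OF cone_of_cc assms(2,3) _ r] assms(5) s by auto
  then show ?thesis
    using cc_face_scale[OF cone_of_cc assms(2,3,7)] cone_of_gen assms by blast
qed



lemma det_Ints:
  fixes M :: "real^'n^'n"
  assumes "\<And>i j. M $ i $ j \<in> \<int>"
  shows "det M \<in> \<int>"
  unfolding det_def using assms by (intro Ints_sum Ints_mult Ints_prod) auto

lemma rvec_Ints: "x \<in> range rvec \<Longrightarrow> x $ i \<in> \<int>"
  by auto

lemma hyper_span:
  assumes "\<forall>s\<in>S. w \<bullet> s = 0" "x \<in> span S"
  shows "w \<bullet> x = 0"
  using span_induct[OF assms(2) subspace_hyperplane[of w]] assms(1) by blast

lemma basis_coords:
  fixes T :: "(real^'d) set"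
  assumes indep: "independent T" and cardT: "card T = CARD('d)" and Tint: "T \<subseteq> range rvec"
  obtains f :: "'d \<Rightarrow> real^'d" and coord :: "'d \<Rightarrow> real^'d" and D :: real
  where "bij_betw f UNIV T" "\<And>x. x = (\<Sum>j\<in>UNIV. (coord j \<bullet> x) *\<^sub>R f j)"
        "\<And>j k. coord j \<bullet> f k = (if j = k then 1 else 0)"
        "D \<noteq> 0" "\<And>j i. D * coord j $ i \<in> \<int>"
proof -
  have finT: "finite T" using indep finiteI_independent by blast
  obtain f where f: "bij_betw f (UNIV::'d set) T"
    using finite_same_card_bij[of "UNIV::'d set" T] finT cardT by auto
  define M :: "real^'d^'d" where "M = (\<chi> i j. f j $ i)"
  have Mv: "M *v c = (\<Sum>j\<in>UNIV. c $ j *\<^sub>R f j)" for c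
    by (simp add: M_def matrix_vector_mult_def vec_eq_iff mult.commute)
  have injM: "inj ((*v) M)"
    unfolding linear_injective_0[OF matrix_vector_mul_linear]
  proof (intro allI impI)
    fix c :: "real^'d" assume "M *v c = 0"
    then have z: "(\<Sum>j\<in>UNIV. c $ j *\<^sub>R f j) = 0" by (simp add: Mv)
    define u where "u t = c $ (inv_into UNIV f t)" for t
    have "(\<Sum>t\<in>T. u t *\<^sub>R t) = (\<Sum>j\<in>UNIV. u (f j) *\<^sub>R f j)"
      using sum.reindex_bij_betw[OF f, of "\<lambda>t. u t *\<^sub>R t"] by simp
    also have "\<dots> = (\<Sum>j\<in>UNIV. c $ j *\<^sub>R f j)"
      using f by (simp add: u_def bij_betw_inv_into_left)
    finally have "(\<Sum>t\<in>T. u t *\<^sub>R t) = 0" using z by simp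
    then have "\<forall>t\<in>T. u t = 0" using indep dependent_finite[OF finT] by blast
    then have "u (f j) = 0" for j using f bij_betwE by blast
    then show "c = 0" using f by (simp add: u_def bij_betw_inv_into_left vec_eq_iff)
  qed
  have "det M \<noteq> 0"
    using det_nz_iff_inj[OF matrix_vector_mul_linear[of M]] injM by simp
  then obtain B where B: "M ** B = mat 1" "B ** M = mat 1"
    unfolding invertible_det_nz[symmetric] invertible_def by blast
  define coord where "coord j = (\<chi> i. B $ j $ i)" for j
  have cx: "coord j \<bullet> x = (B *v x) $ j" for j x
    by (simp add: coord_def inner_vec_def matrix_vector_mult_def)
  show thesis
  proof
    show "bij_betw f UNIV T" by (rule f)
    show "x = (\<Sum>j\<in>UNIV. (coord j \<bullet> x) *\<^sub>R f j)" for x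
    proof -
      have "x = M *v (B *v x)" by (simp add: matrix_vector_mul_assoc B)
      then show ?thesis by (simp add: Mv cx)
    qed
    show "coord j \<bullet> f k = (if j = k then 1 else 0)" for j k
    proof -
      have "f k = M *v axis k 1"
        by (simp add: Mv axis_def if_distrib[of "\<lambda>c. c *\<^sub>R _"] cong: if_cong)
      then have "B *v f k = axis k 1" by (simp add: matrix_vector_mul_assoc B)
      then show ?thesis by (simp add: cx axis_def)
    qed
    show "det M \<noteq> 0" by fact
    show "det M * coord j $ i \<in> \<int>" for j i
    proof -
      have "det (\<chi> r s. if s = j then (M *v (B *v axis i 1)) $ r else M $ r $ s) = (B *v axis i 1) $ j * det M"
        by (rule cramer_lemma)
      moreover have "M *v (B *v axis i 1) = axis i 1" by (simp add: matrix_vector_mul_assoc B)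
      moreover have "(B *v axis i 1) $ j = coord j $ i"
        using cx[of j "axis i 1"] by (simp add: coord_def inner_vec_def axis_def if_distrib cong: if_cong)
      moreover have "det (\<chi> r s. if s = j then (axis i 1 :: real^'d) $ r else M $ r $ s) \<in> \<int>"
      proof (rule det_Ints)
        fix r s
        have "f s \<in> T" using f bij_betwE by blast
        then have "f s $ r \<in> \<int>" using Tint by auto
        then show "(\<chi> r s. if s = j then (axis i 1 :: real^'d) $ r else M $ r $ s) $ r $ s \<in> \<int>"
          by (simp add: M_def axis_def)
      qed
      ultimately show ?thesis by (metis mult.commute)
    qed
  qed
qed



lemma rvec_axis: "rvec (axis i 1) = axis i 1"
  by (simp add: vec_eq_iff axis_def)

lemma Basis_rvec: "(b :: real^'d) \<in> Basis \<Longrightarrow> b \<in> range rvec"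
  unfolding Basis_vec_def by (auto simp: Basis_real_def) (metis rangeI rvec_axis)

lemma card_spanning_indep:
  fixes T :: "(real^'d) set"
  assumes "independent T" "UNIV \<subseteq> span T"
  shows "card T = CARD('d)"
proof -
  have "card T = dim T" using assms dim_eq_card_independent by metis
  also have "\<dots> = dim (span T)" by simp
  also have "span T = UNIV" using assms by auto
  finally show ?thesis by simp
qed

lemma spanning_of_card:
  fixes T :: "(real^'d) set"
  assumes "independent T" "card T = CARD('d)"
  shows "UNIV \<subseteq> span T"
  using card_ge_dim_independent[of T UNIV] assms by simp

lemma rat_repr:
  fixes B :: "(int^'d) set"
  assumes finB: "finite B" and yspan: "rvec y \<in> span (rvec ` B)"
  shows "rvec y \<in> qspan B"
proof -
  obtain S0 where S0: "S0 \<subseteq> rvec ` B" "independent S0" "rvec ` B \<subseteq> span S0"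
    using maximal_independent_subset[of "rvec ` B"] by blast
  obtain T where T: "S0 \<subseteq> T" "T \<subseteq> S0 \<union> Basis" "independent T" "S0 \<union> Basis \<subseteq> span T"
    using maximal_independent_subset_extend[of S0 "S0 \<union> Basis"] S0 by blast
  have "UNIV \<subseteq> span T"
  proof -
    have "Basis \<subseteq> span T" using T(4) by blast
    then have "span Basis \<subseteq> span T" using span_minimal[OF _ subspace_span] by blast
    then show ?thesis by simp
  qed
  then have cardT: "card T = CARD('d)" using card_spanning_indep T(3) by blast
  have Tint: "T \<subseteq> range rvec" using T(2) S0(1) Basis_rvec by blast
  obtain f :: "'d \<Rightarrow> real^'d" and coord :: "'d \<Rightarrow> real^'d" and D :: real where f: "bij_betw f UNIV T"
    and dec: "\<And>x. x = (\<Sum>j\<in>UNIV. (coord j \<bullet> x) *\<^sub>R f j)"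
    and cf: "\<And>j k. coord j \<bullet> f k = (if j = k then 1 else 0)"
    and D: "D \<noteq> 0" "\<And>j i. D * coord j $ i \<in> \<int>"
    using basis_coords[OF T(3) cardT Tint] by blast
  have finT: "finite T" using T(3) finiteI_independent by blast
  have yS0: "rvec y \<in> span S0"
    using yspan span_minimal[OF S0(3) subspace_span] by blast
  define cy where "cy j = coord j \<bullet> rvec y" for j
  have cy0: "cy j = 0" if "f j \<notin> S0" for j
  proof -
    have "\<forall>s\<in>S0. coord j \<bullet> s = 0"
    proof
      fix s assume s: "s \<in> S0"
      have "f (inv_into UNIV f s) = s" using bij_betw_inv_into_right[OF f] s T(1) by blast
      then obtain k where k: "s = f k" by metis
      then have "k \<noteq> j" using s that by auto
      then show "coord j \<bullet> s = 0" using cf k by simp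
    qed
    then show ?thesis unfolding cy_def using hyper_span yS0 by blast
  qed
  have cyQ: "cy j \<in> \<rat>" for j
  proof -
    have "cy j = (\<Sum>i\<in>UNIV. (D * coord j $ i) * real_of_int (y $ i)) / D"
      using D(1) by (simp add: cy_def inner_rvec sum_divide_distrib)
    moreover have "(\<Sum>i\<in>UNIV. (D * coord j $ i) * real_of_int (y $ i)) \<in> \<int>"
      by (intro Ints_sum Ints_mult[OF D(2)] Ints_of_int)
    moreover have "D \<in> \<int>"
    proof -
      have "D * coord j $ i \<in> \<int>" for i using D(2) by blast
      have "D * (coord j \<bullet> f j) = (\<Sum>i\<in>UNIV. (D * coord j $ i) * f j $ i)"
        by (simp add: inner_vec_def sum_distrib_left mult.assoc)
      moreover have "f j \<in> T" using f bij_betwE by blast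
      then have "f j $ i \<in> \<int>" for i using Tint by auto
      moreover have "(\<Sum>i\<in>UNIV. (D * coord j $ i) * f j $ i) \<in> \<int>"
        using \<open>\<And>i. f j $ i \<in> \<int>\<close> by (intro Ints_sum Ints_mult[OF D(2)])
      ultimately have "D * (coord j \<bullet> f j) \<in> \<int>" by simp
      then show ?thesis using cf by simp
    qed
    ultimately show ?thesis using Ints_subset_Rats by (metis Rats_divide subsetD)
  qed
  define g where "g = inv_into UNIV f"
  have gf: "g (f j) = j" for j using f by (simp add: g_def bij_betw_inv_into_left)
  have fg: "t \<in> T \<Longrightarrow> f (g t) = t" for t using f by (simp add: g_def bij_betw_inv_into_right)
  have "rvec y = (\<Sum>j\<in>UNIV. cy j *\<^sub>R f j)" using dec unfolding cy_def by blast
  also have "\<dots> = (\<Sum>t\<in>T. cy (g t) *\<^sub>R t)"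
    using sum.reindex_bij_betw[OF f, of "\<lambda>t. cy (g t) *\<^sub>R t"] by (simp add: gf)
  also have "\<dots> = (\<Sum>t\<in>S0. cy (g t) *\<^sub>R t)"
  proof (rule sum.mono_neutral_right[OF finT T(1)], intro ballI)
    fix t assume "t \<in> T - S0"
    then show "cy (g t) *\<^sub>R t = 0" using cy0[of "g t"] fg by auto
  qed
  also have "\<dots> = (\<Sum>b\<in>{b\<in>B. rvec b \<in> S0}. cy (g (rvec b)) *\<^sub>R rvec b)"
  proof -
    have "S0 = rvec ` {b\<in>B. rvec b \<in> S0}" using S0(1) by auto
    moreover have "inj_on rvec {b\<in>B. rvec b \<in> S0}" by (simp add: inj_on_def rvec_inj)
    ultimately show ?thesis by (intro sum.reindex_cong[of rvec]) auto
  qed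
  also have "\<dots> = (\<Sum>b\<in>B. (if rvec b \<in> S0 then cy (g (rvec b)) else 0) *\<^sub>R rvec b)"
  proof -
    have "(\<Sum>b\<in>B. (if rvec b \<in> S0 then cy (g (rvec b)) else 0) *\<^sub>R rvec b)
        = (\<Sum>b\<in>B. if rvec b \<in> S0 then cy (g (rvec b)) *\<^sub>R rvec b else 0)"
      by (rule sum.cong) auto
    also have "\<dots> = (\<Sum>b\<in>{b\<in>B. rvec b \<in> S0}. cy (g (rvec b)) *\<^sub>R rvec b)"
      by (rule sum.inter_filter[OF finB, symmetric])
    finally show ?thesis by simp
  qed
  finally have eq: "rvec y = (\<Sum>b\<in>B. (if rvec b \<in> S0 then cy (g (rvec b)) else 0) *\<^sub>R rvec b)" .
  have "\<forall>b\<in>B. (if rvec b \<in> S0 then cy (g (rvec b)) else 0) \<in> \<rat>" using cyQ by simp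
  then have "\<exists>q. rvec y = (\<Sum>b\<in>B. q b *\<^sub>R rvec b) \<and> (\<forall>b\<in>B. q b \<in> \<rat>)"
    using eq by (intro exI[of _ "\<lambda>b. if rvec b \<in> S0 then cy (g (rvec b)) else 0"]) (simp only:)
  then show ?thesis unfolding qspan_def by (simp only: mem_Collect_eq)
qed

lemma int_normal:
  fixes S0 :: "(real^'d) set"
  assumes "S0 \<subseteq> range rvec" "independent S0" "card S0 + 1 = CARD('d)"
    "e \<in> range rvec" "e \<notin> span S0"
  obtains W where "\<And>i. W $ i \<in> \<int>" "\<And>s. s \<in> span S0 \<Longrightarrow> W \<bullet> s = 0" "W \<bullet> e \<noteq> 0"
proof -
  let ?T = "insert e S0"
  have ind: "independent ?T" using assms independent_insertI by blast
  have "e \<notin> S0" using assms span_base by blast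
  then have cT: "card ?T = CARD('d)" using assms finiteI_independent[of S0] by (simp add: card_insert_disjoint)
  have Tint: "?T \<subseteq> range rvec" using assms(1,4) by blast
  obtain f :: "'d \<Rightarrow> real^'d" and coord :: "'d \<Rightarrow> real^'d" and D :: real where f: "bij_betw f UNIV ?T"
    and dec: "\<And>x. x = (\<Sum>j\<in>UNIV. (coord j \<bullet> x) *\<^sub>R f j)"
    and cf: "\<And>j k. coord j \<bullet> f k = (if j = k then 1 else 0)"
    and D: "D \<noteq> 0" "\<And>j i. D * coord j $ i \<in> \<int>"
    using basis_coords[OF ind cT Tint] by blast
  have "f (inv_into UNIV f e) = e" using bij_betw_inv_into_right[OF f] by blast
  then obtain j0 where j0: "f j0 = e" by metis
  define W where "W = D *\<^sub>R coord j0"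
  show thesis
  proof
    show "W $ i \<in> \<int>" for i using D by (simp add: W_def)
    have "\<forall>s\<in>S0. W \<bullet> s = 0"
    proof
      fix s assume s: "s \<in> S0"
      have "f (inv_into UNIV f s) = s" using bij_betw_inv_into_right[OF f] s by blast
      then obtain k where k: "s = f k" by metis
      then have "k \<noteq> j0" using s j0 \<open>e \<notin> S0\<close> by auto
      then show "W \<bullet> s = 0" using cf k by (simp add: W_def)
    qed
    then show "s \<in> span S0 \<Longrightarrow> W \<bullet> s = 0" for s using hyper_span by blast
    show "W \<bullet> e \<noteq> 0" using cf[of j0 j0] j0 D by (simp add: W_def)
  qed
qed



lemma zspan_rvec_span:
  assumes "z \<in> zspan B" shows "rvec z \<in> span (rvec ` B)"
proof -
  obtain k where z: "z = (\<Sum>a\<in>B. k a *s a)" using assms unfolding zspan_def by blast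
  have "rvec z = (\<Sum>a\<in>B. of_int (k a) *\<^sub>R rvec a)" by (simp add: z rvec_sum rvec_smult)
  also have "\<dots> \<in> span (rvec ` B)"
    by (intro span_sum span_scale span_base) auto
  finally show ?thesis .
qed

lemma inner_eq_vec:
  fixes u v :: "real^'d"
  assumes "\<And>x. u \<bullet> x = v \<bullet> x" shows "u = v"
proof -
  have "(u - v) \<bullet> (u - v) = 0" using assms by (simp add: inner_diff_left)
  then show ?thesis by simp
qed

lemma prop_lemma:
  fixes u v e :: "real^'d"
  assumes dec: "\<And>x. \<exists>t. x - t *\<^sub>R e \<in> span S"
    and u0: "\<And>s. s \<in> span S \<Longrightarrow> u \<bullet> s = 0"
    and v0: "\<And>s. s \<in> span S \<Longrightarrow> v \<bullet> s = 0"
    and ve: "v \<bullet> e \<noteq> 0"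
  shows "u = (u \<bullet> e / (v \<bullet> e)) *\<^sub>R v"
proof (rule inner_eq_vec)
  fix x
  obtain t where t: "x - t *\<^sub>R e \<in> span S" using dec by blast
  have "u \<bullet> x = u \<bullet> (x - t *\<^sub>R e) + t * (u \<bullet> e)" by (simp add: inner_diff_right)
  also have "\<dots> = t * (u \<bullet> e)" using u0[OF t] by simp
  finally have ux: "u \<bullet> x = t * (u \<bullet> e)" .
  have "v \<bullet> x = v \<bullet> (x - t *\<^sub>R e) + t * (v \<bullet> e)" by (simp add: inner_diff_right)
  also have "\<dots> = t * (v \<bullet> e)" using v0[OF t] by simp
  finally have vx: "v \<bullet> x = t * (v \<bullet> e)" .
  show "u \<bullet> x = (u \<bullet> e / (v \<bullet> e)) *\<^sub>R v \<bullet> x"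
    using ve by (simp add: ux vx field_simps)
qed

lemma int_inner_Ints:
  assumes "\<And>i. W $ i \<in> \<int>" shows "W \<bullet> rvec z \<in> \<int>"
  unfolding inner_rvec using assms by (intro Ints_sum Ints_mult) auto

lemma primitive:
  fixes W :: "real^'d"
  assumes Wint: "\<And>i. W $ i \<in> \<int>" and W0: "W \<bullet> rvec e0 \<noteq> 0"
  obtains g :: real where "g > 0" "(\<lambda>z. ((1/g) *\<^sub>R W) \<bullet> rvec z) ` UNIV = \<int>"
proof -
  define G where "G = {n::int. \<exists>z. W \<bullet> rvec z = of_int n}"
  have inG: "\<exists>n\<in>G. W \<bullet> rvec z = of_int n" for z
    using int_inner_Ints[OF Wint, of z] unfolding G_def by (auto elim!: Ints_cases)
  have Gdiff: "n - m \<in> G" if nm: "n \<in> G" "m \<in> G" for n m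
  proof -
    obtain z1 z2 where "W \<bullet> rvec z1 = of_int n" "W \<bullet> rvec z2 = of_int m" using nm G_def by auto
    then have "W \<bullet> rvec (z1 - z2) = of_int (n - m)" by (simp add: rvec_diff inner_diff_right)
    then show ?thesis unfolding G_def by blast
  qed
  have Gmult: "k * n \<in> G" if nG: "n \<in> G" for n k
  proof -
    obtain z1 where "W \<bullet> rvec z1 = of_int n" using nG G_def by auto
    then have "W \<bullet> rvec (k *s z1) = of_int (k * n)" by (simp add: rvec_smult)
    then show ?thesis unfolding G_def by blast
  qed
  obtain n0 where n0: "n0 \<in> G" "W \<bullet> rvec e0 = of_int n0" using inG by blast
  have "n0 \<noteq> 0" using n0 W0 by auto
  have "\<bar>n0\<bar> \<in> G" using Gmult[OF n0(1), of "sgn n0"] by (simp add: abs_sgn mult.commute)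
  then have ex: "\<exists>n::nat. n > 0 \<and> int n \<in> G" using \<open>n0 \<noteq> 0\<close>
    by (intro exI[of _ "nat \<bar>n0\<bar>"]) auto
  define gn where "gn = (LEAST n::nat. n > 0 \<and> int n \<in> G)"
  define g where "g = int gn"
  have gn: "gn > 0 \<and> int gn \<in> G" using LeastI_ex[OF ex] unfolding gn_def .
  then have g: "g > 0" "g \<in> G" unfolding g_def by auto
  have gmin: "g \<le> n" if "n > 0" "n \<in> G" for n
  proof -
    have "gn \<le> nat n" unfolding gn_def using that by (intro Least_le) auto
    then show ?thesis using that unfolding g_def by linarith
  qed
  have gdvd: "g dvd n" if "n \<in> G" for n
  proof -
    have "n mod g = n - (n div g) * g" by (simp add: minus_div_mult_eq_mod)
    then have "n mod g \<in> G" using Gdiff[OF that Gmult[OF g(2)]] by metis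
    moreover have "0 \<le> n mod g" "n mod g < g" using g(1) by auto
    ultimately have "n mod g = 0" using gmin by force
    then show ?thesis by auto
  qed
  show thesis
  proof
    show "real_of_int g > 0" using g by simp
    show "(\<lambda>z. ((1 / real_of_int g) *\<^sub>R W) \<bullet> rvec z) ` UNIV = \<int>"
    proof (intro equalityI subsetI)
      fix x assume "x \<in> (\<lambda>z. ((1 / real_of_int g) *\<^sub>R W) \<bullet> rvec z) ` UNIV"
      then obtain z where x: "x = ((1 / real_of_int g) *\<^sub>R W) \<bullet> rvec z" by blast
      obtain n where n: "n \<in> G" "W \<bullet> rvec z = of_int n" using inG by blast
      obtain q where "n = g * q" using gdvd[OF n(1)] by blast
      then have "x = of_int q" using x n g(1) by simp
      then show "x \<in> \<int>" by simp
    next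
      fix x :: real assume "x \<in> \<int>"
      then obtain q where q: "x = of_int q" by (auto elim: Ints_cases)
      obtain zg where zg: "W \<bullet> rvec zg = of_int g" using g(2) G_def by auto
      have "((1 / real_of_int g) *\<^sub>R W) \<bullet> rvec (q *s zg) = x"
        using zg g(1) q by (simp add: rvec_smult)
      then show "x \<in> (\<lambda>z. ((1 / real_of_int g) *\<^sub>R W) \<bullet> rvec z) ` UNIV" by (metis rangeI)
    qed
  qed
qed



definition Pform :: "(int^'d) set \<Rightarrow> (real^'d) set \<Rightarrow> real^'d \<Rightarrow> bool" where
  "Pform A \<sigma> w \<longleftrightarrow> (\<forall>x\<in>cone_of A. 0 \<le> w \<bullet> x) \<and> (\<forall>x\<in>\<sigma>. w \<bullet> x = 0)
                        \<and> (\<lambda>z. w \<bullet> rvec z) ` UNIV = \<int>"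

lemma facet_form_eq: "facet_form A \<sigma> = (THE w. Pform A \<sigma> w)"
  unfolding facet_form_def Pform_def ..

context
  fixes A :: "(int^'d) set"
  assumes finA: "finite A" and genA: "zspan A = UNIV"
begin

lemma span_cone_UNIV: "span (cone_of A) = UNIV"
proof -
  have "Basis \<subseteq> span (cone_of A)"
  proof
    fix b :: "real^'d" assume "b \<in> Basis"
    then obtain z where z: "b = rvec z" using Basis_rvec by blast
    have "rvec z \<in> span (rvec ` A)" using zspan_rvec_span genA by blast
    moreover have "rvec ` A \<subseteq> cone_of A" using cone_of_gen finA by blast
    ultimately show "b \<in> span (cone_of A)" using z span_mono by blast
  qed
  then have "span Basis \<subseteq> span (cone_of A)" using span_minimal[OF _ subspace_span] by blast
  then show ?thesis by auto
qed

lemma aff_dim_cone: "aff_dim (cone_of A) = int CARD('d)"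
proof -
  have "0 \<in> affine hull (cone_of A)" by (rule hull_inc[OF cone_of_0])
  then have "aff_dim (cone_of A) = int (dim (cone_of A))" by (rule aff_dim_zero)
  also have "dim (cone_of A) = dim (span (cone_of A))" by simp
  also have "\<dots> = CARD('d)" using span_cone_UNIV by simp
  finally show ?thesis .
qed

lemma span_face:
  assumes "\<tau> face_of cone_of A" "\<tau> \<noteq> {}"
  shows "span \<tau> = span (rvec ` Atau A \<tau>)"
proof
  show "span (rvec ` Atau A \<tau>) \<subseteq> span \<tau>" by (rule span_mono) (auto simp: Atau_def)
  have "\<tau> \<subseteq> span (rvec ` Atau A \<tau>)"
  proof
    fix x assume x: "x \<in> \<tau>"
    then have "x \<in> cone_of A" using assms face_of_imp_subset by blast
    then obtain c where c: "x = (\<Sum>a\<in>A. c a *\<^sub>R rvec a)" "\<forall>a\<in>A. 0 \<le> c a"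
      unfolding cone_of_def by blast
    have "c a *\<^sub>R rvec a \<in> span (rvec ` Atau A \<tau>)" if "a \<in> A" for a
    proof (cases "c a = 0")
      case True then show ?thesis by (simp add: span_zero)
    next
      case False
      then have "c a > 0" using c that by force
      then have "rvec a \<in> \<tau>" using cone_face_gen[OF finA assms c(2)] x c(1) that by blast
      then have "a \<in> Atau A \<tau>" using that by (simp add: Atau_def)
      then show ?thesis by (intro span_scale span_base) auto
    qed
    then show "x \<in> span (rvec ` Atau A \<tau>)" unfolding c(1) by (intro span_sum) auto
  qed
  then show "span \<tau> \<subseteq> span (rvec ` Atau A \<tau>)" using span_minimal[OF _ subspace_span] by blast
qed

lemma facet_exists:
  assumes "\<sigma> \<in> facets A"
  shows "\<exists>w e. Pform A \<sigma> w \<and> \<sigma> = cone_of A \<inter> {x. w \<bullet> x = 0} \<and> w \<bullet> e \<noteq> 0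
           \<and> (\<forall>x. \<exists>t. x - t *\<^sub>R e \<in> span \<sigma>)"
proof -
  let ?C = "cone_of A"
  have fo: "\<sigma> facet_of ?C" using assms by (simp add: facets_def facet_of_def)
  have fc: "\<sigma> face_of ?C" "\<sigma> \<noteq> {}" using assms by (auto simp: facets_def)
  have s0: "0 \<in> \<sigma>" using cc_face_0[OF cone_of_cc fc] .
  obtain a b where ab: "a \<noteq> 0" "?C \<subseteq> {x. a \<bullet> x \<le> b}" "\<sigma> = ?C \<inter> {x. a \<bullet> x = b}"
    using facet_of_polyhedron[OF cone_of_polyhedron[OF finA] fo] by blast
  have "b = 0" using s0 ab(3) by auto
  with ab have ab: "a \<noteq> 0" "\<And>x. x \<in> ?C \<Longrightarrow> a \<bullet> x \<le> 0" "\<sigma> = ?C \<inter> {x. a \<bullet> x = 0}" by auto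
  have "aff_dim \<sigma> = aff_dim ?C - 1"
    using assms unfolding facets_def by blast
  then have "aff_dim \<sigma> = int CARD('d) - 1" using aff_dim_cone by simp
  moreover have "aff_dim \<sigma> = int (dim \<sigma>)"
    by (rule aff_dim_zero) (rule hull_inc[OF s0])
  ultimately have dims: "dim \<sigma> + 1 = CARD('d)" by linarith
  obtain S0 where S0: "S0 \<subseteq> rvec ` Atau A \<sigma>" "independent S0" "rvec ` Atau A \<sigma> \<subseteq> span S0"
      "card S0 = dim (rvec ` Atau A \<sigma>)"
    using basis_exists[of "rvec ` Atau A \<sigma>"] by blast
  have spS: "span \<sigma> = span (rvec ` Atau A \<sigma>)" using span_face fc by blast
  have spS0: "span S0 = span \<sigma>"
  proof
    show "span S0 \<subseteq> span \<sigma>" using S0(1) spS span_mono by blast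
    show "span \<sigma> \<subseteq> span S0" using spS span_minimal[OF S0(3) subspace_span] by simp
  qed
  have cS0: "card S0 + 1 = CARD('d)"
  proof -
    have "dim (rvec ` Atau A \<sigma>) = dim (span (rvec ` Atau A \<sigma>))" by simp
    also have "\<dots> = dim \<sigma>" by (simp only: spS[symmetric] dim_span)
    finally show ?thesis using dims S0(4) by simp
  qed
  obtain e where e: "e \<in> Basis" "e \<notin> span S0"
  proof -
    have "\<not> Basis \<subseteq> span S0"
    proof
      assume "Basis \<subseteq> span S0"
      then have "span Basis \<subseteq> span S0" using span_minimal[OF _ subspace_span] by blast
      then have "dim (UNIV :: (real^'d) set) \<le> dim S0"
        using dim_subset[OF \<open>span Basis \<subseteq> span S0\<close>] by simp
      then show False using cS0 dim_eq_card_independent[OF S0(2)] by simp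
    qed
    then show thesis using that by blast
  qed
  have S0int: "S0 \<subseteq> range rvec" using S0(1) by blast
  obtain W where W: "\<And>i. W $ i \<in> \<int>" "\<And>s. s \<in> span S0 \<Longrightarrow> W \<bullet> s = 0" "W \<bullet> e \<noteq> 0"
    using int_normal[OF S0int S0(2) cS0 Basis_rvec[OF e(1)] e(2)] by blast
  have dec: "\<exists>t. x - t *\<^sub>R e \<in> span S0" for x
  proof -
    have ind: "independent (insert e S0)" using independent_insertI e(2) S0(2) by blast
    have "e \<notin> S0" using e(2) span_base by blast
    then have "card (insert e S0) = CARD('d)"
      using cS0 finiteI_independent[OF S0(2)] by (simp add: card_insert_disjoint)
    then have "x \<in> span (insert e S0)" using spanning_of_card[OF ind] by blast
    then show ?thesis using span_breakdown_eq by blast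
  qed
  have a0: "\<And>s. s \<in> span S0 \<Longrightarrow> a \<bullet> s = 0"
  proof -
    have "\<forall>s\<in>\<sigma>. a \<bullet> s = 0" using ab(3) by blast
    then show "\<And>s. s \<in> span S0 \<Longrightarrow> a \<bullet> s = 0" using hyper_span spS0 by blast
  qed
  define k where "k = a \<bullet> e / (W \<bullet> e)"
  have ak: "a = k *\<^sub>R W" using prop_lemma[OF dec a0 W(2) W(3)] unfolding k_def .
  have "k \<noteq> 0" using ak ab(1) by auto
  define W' where "W' = (- sgn k) *\<^sub>R W"
  have aW': "a = (- \<bar>k\<bar>) *\<^sub>R W'"
    unfolding ak W'_def using \<open>k \<noteq> 0\<close> by (auto simp: sgn_if)
  have W'int: "W' $ i \<in> \<int>" for i
    using W(1)[of i] \<open>k \<noteq> 0\<close> by (auto simp: W'_def sgn_if)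
  obtain ze where ze: "e = rvec ze" using Basis_rvec[OF e(1)] by blast
  have W'e: "W' \<bullet> rvec ze \<noteq> 0"
    using W(3) \<open>k \<noteq> 0\<close> unfolding W'_def ze[symmetric] by (simp add: sgn_if)
  obtain g where g: "g > 0" "(\<lambda>z. ((1/g) *\<^sub>R W') \<bullet> rvec z) ` UNIV = \<int>"
    by (rule primitive[OF W'int W'e])
  define w where "w = (1/g) *\<^sub>R W'"
  have aw: "a = (- (\<bar>k\<bar> * g)) *\<^sub>R w" unfolding w_def aW' using g(1) by simp
  have kg: "\<bar>k\<bar> * g > 0" using \<open>k \<noteq> 0\<close> g(1) by simp
  have wx: "w \<bullet> x = - (a \<bullet> x) / (\<bar>k\<bar> * g)" for x
  proof -
    have "a \<bullet> x = - (\<bar>k\<bar> * g) * (w \<bullet> x)" by (subst aw) simp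
    then show ?thesis using kg \<open>k \<noteq> 0\<close> g(1) by (simp add: field_simps)
  qed
  have sig: "\<sigma> = ?C \<inter> {x. w \<bullet> x = 0}" using ab(3) wx kg by auto
  have P: "Pform A \<sigma> w"
    unfolding Pform_def
  proof (intro conjI ballI)
    show "0 \<le> w \<bullet> x" if "x \<in> ?C" for x
      using ab(2)[OF that] kg by (simp add: wx divide_nonpos_pos)
    show "w \<bullet> x = 0" if "x \<in> \<sigma>" for x using sig that by blast
    show "(\<lambda>z. w \<bullet> rvec z) ` UNIV = \<int>" using g(2) unfolding w_def .
  qed
  have "w \<bullet> e \<noteq> 0" using wx ak W(3) \<open>k \<noteq> 0\<close> kg g(1) by (simp add: ak)
  moreover have "\<forall>x. \<exists>t. x - t *\<^sub>R e \<in> span \<sigma>" using dec spS0 by blast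
  ultimately show ?thesis using P sig by blast
qed

lemma facet_unique:
  assumes P: "Pform A \<sigma> w" and we: "w \<bullet> e \<noteq> 0" and dec: "\<forall>x. \<exists>t. x - t *\<^sub>R e \<in> span \<sigma>"
    and P2: "Pform A \<sigma> w2"
  shows "w2 = w"
proof -
  have w0: "\<And>s. s \<in> span \<sigma> \<Longrightarrow> w \<bullet> s = 0" using P hyper_span unfolding Pform_def by blast
  have w20: "\<And>s. s \<in> span \<sigma> \<Longrightarrow> w2 \<bullet> s = 0" using P2 hyper_span unfolding Pform_def by blast
  define k where "k = w2 \<bullet> e / (w \<bullet> e)"
  have dec': "\<And>x. \<exists>t. x - t *\<^sub>R e \<in> span \<sigma>" using dec by blast
  have wk: "w2 = k *\<^sub>R w" using prop_lemma[OF dec' w20 w0 we] unfolding k_def .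
  have "(1::real) \<in> (\<lambda>z. w \<bullet> rvec z) ` UNIV" using P unfolding Pform_def by simp
  then obtain z1 where z1: "w \<bullet> rvec z1 = 1" by (auto simp del: Ints_1)
  have "(1::real) \<in> (\<lambda>z. w2 \<bullet> rvec z) ` UNIV" using P2 unfolding Pform_def by simp
  then obtain z2 where z2: "w2 \<bullet> rvec z2 = 1" by (auto simp del: Ints_1)
  have kI: "k \<in> \<int>"
  proof -
    have "w2 \<bullet> rvec z1 \<in> \<int>" using P2 unfolding Pform_def by blast
    then show ?thesis using z1 wk by simp
  qed
  have mI: "w \<bullet> rvec z2 \<in> \<int>" using P unfolding Pform_def by blast
  have km: "k * (w \<bullet> rvec z2) = 1" using z2 wk by simp
  have "\<exists>x\<in>cone_of A. w \<bullet> x > 0"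
  proof (rule ccontr)
    assume "\<not> ?thesis"
    then have "\<forall>x\<in>cone_of A. w \<bullet> x = 0" using P unfolding Pform_def by force
    then have "w \<bullet> e = 0" using hyper_span span_cone_UNIV by blast
    then show False using we by simp
  qed
  then obtain x where x: "x \<in> cone_of A" "w \<bullet> x > 0" by blast
  have "w2 \<bullet> x \<ge> 0" using P2 x unfolding Pform_def by blast
  then have "k \<ge> 0" using x wk by (simp add: zero_le_mult_iff)
  obtain ki where ki: "k = of_int ki" using kI by (auto elim: Ints_cases)
  obtain mi where mi: "w \<bullet> rvec z2 = of_int mi" using mI by (auto elim: Ints_cases)
  have "real_of_int (ki * mi) = 1" using km ki mi by simp
  then have "ki * mi = 1" by (simp only: of_int_eq_1_iff)
  then have "ki = 1" using \<open>k \<ge> 0\<close> ki by (auto simp: zmult_eq_1_iff)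
  then show ?thesis using wk ki by simp
qed

lemma facet_props:
  assumes "\<sigma> \<in> facets A"
  shows "Pform A \<sigma> (facet_form A \<sigma>)"
    and "\<sigma> = cone_of A \<inter> {x. facet_form A \<sigma> \<bullet> x = 0}"
proof -
  obtain w e where we: "Pform A \<sigma> w" "\<sigma> = cone_of A \<inter> {x. w \<bullet> x = 0}" "w \<bullet> e \<noteq> 0"
     "\<forall>x. \<exists>t. x - t *\<^sub>R e \<in> span \<sigma>"
    using facet_exists[OF assms] by blast
  have "facet_form A \<sigma> = w"
    unfolding facet_form_eq
    by (rule the_equality) (use we facet_unique in blast)+
  then show "Pform A \<sigma> (facet_form A \<sigma>)" "\<sigma> = cone_of A \<inter> {x. facet_form A \<sigma> \<bullet> x = 0}"
    using we by auto
qed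

end



lemma monoidN_cone: assumes "m \<in> monoidN A" shows "rvec m \<in> cone_of A"
proof -
  obtain n where m: "m = (\<Sum>a\<in>A. int (n a) *s a)" using assms unfolding monoidN_def by blast
  have "rvec m = (\<Sum>a\<in>A. real (n a) *\<^sub>R rvec a)" by (simp add: m rvec_sum rvec_smult)
  then show ?thesis unfolding cone_of_def by (intro CollectI exI[of _ "\<lambda>a. real (n a)"] conjI) auto
qed

lemma zspan_split:
  assumes "z \<in> zspan A" shows "\<exists>n1\<in>monoidN A. \<exists>n2\<in>monoidN A. z = n1 - n2"
proof -
  obtain k where z: "z = (\<Sum>a\<in>A. k a *s a)" using assms unfolding zspan_def by blast
  define n1 where "n1 = (\<Sum>a\<in>A. int (nat (k a)) *s a)"
  define n2 where "n2 = (\<Sum>a\<in>A. int (nat (- k a)) *s a)"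
  have "n1 \<in> monoidN A" unfolding n1_def monoidN_def by (intro CollectI exI[of _ "\<lambda>a. nat (k a)"]) simp
  have "n2 \<in> monoidN A" unfolding n2_def monoidN_def by (intro CollectI exI[of _ "\<lambda>a. nat (- k a)"]) simp
  note \<open>n1 \<in> monoidN A\<close> \<open>n2 \<in> monoidN A\<close>
  moreover have "z = n1 - n2"
  proof -
    have "n1 - n2 = (\<Sum>a\<in>A. int (nat (k a)) *s a - int (nat (- k a)) *s a)"
      unfolding n1_def n2_def by (simp add: sum_subtractf)
    also have "\<dots> = (\<Sum>a\<in>A. k a *s a)"
    proof (rule sum.cong)
      fix a
      have h: "int (nat (k a)) - int (nat (- k a)) = k a" by simp
      have "(int (nat (k a)) - int (nat (- k a))) *s a = k a *s a" by (simp only: h)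
      then show "int (nat (k a)) *s a - int (nat (- k a)) *s a = k a *s a"
        by (simp add: vec_eq_iff left_diff_distrib)
    qed simp
    finally show ?thesis using z by simp
  qed
  ultimately show ?thesis by blast
qed

lemma qspan_cspan: assumes "rvec y \<in> qspan B" shows "cvec y \<in> cspan B"
proof -
  obtain q where q: "rvec y = (\<Sum>b\<in>B. q b *\<^sub>R rvec b)" using assms unfolding qspan_def by blast
  have "cvec y = (\<Sum>b\<in>B. complex_of_real (q b) *s cvec b)"
  proof (subst vec_eq_iff, intro allI)
    fix i
    have "real_of_int (y $ i) = (\<Sum>b\<in>B. q b * real_of_int (b $ i))"
      using arg_cong[OF q, of "\<lambda>v. v $ i"] by simp
    then have "complex_of_real (real_of_int (y $ i)) = complex_of_real (\<Sum>b\<in>B. q b * real_of_int (b $ i))"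
      by simp
    then show "cvec y $ i = (\<Sum>b\<in>B. complex_of_real (q b) *s cvec b) $ i"
      by simp
  qed
  then show ?thesis unfolding cspan_def by (intro CollectI exI[of _ "\<lambda>b. complex_of_real (q b)"] conjI) simp_all
qed

lemma cspan_real: assumes "cvec y \<in> cspan B" shows "rvec y \<in> span (rvec ` B)"
proof -
  obtain c where c: "cvec y = (\<Sum>b\<in>B. c b *s cvec b)" using assms unfolding cspan_def by blast
  have "rvec y = (\<Sum>b\<in>B. Re (c b) *\<^sub>R rvec b)"
  proof (subst vec_eq_iff, intro allI)
    fix i
    have "complex_of_int (y $ i) = (\<Sum>b\<in>B. c b * complex_of_int (b $ i))"
      using arg_cong[OF c, of "\<lambda>v. v $ i"] by simp
    then have "Re (complex_of_int (y $ i)) = Re (\<Sum>b\<in>B. c b * complex_of_int (b $ i))" by simp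
    then show "rvec y $ i = (\<Sum>b\<in>B. Re (c b) *\<^sub>R rvec b) $ i"
      by (simp add: Re_sum)
  qed
  also have "\<dots> \<in> span (rvec ` B)" by (intro span_sum span_scale span_base) auto
  finally show ?thesis .
qed



context
  fixes A :: "(int^'d) set"
  assumes finA: "finite A" and genA: "zspan A = UNIV"
begin

lemma F_Ints: "\<sigma> \<in> facets A \<Longrightarrow> facet_form A \<sigma> \<bullet> rvec z \<in> \<int>"
  using facet_props(1)[OF finA genA] unfolding Pform_def by blast

lemma F_nonneg: "\<sigma> \<in> facets A \<Longrightarrow> x \<in> cone_of A \<Longrightarrow> 0 \<le> facet_form A \<sigma> \<bullet> x"
  using facet_props(1)[OF finA genA] unfolding Pform_def by blast

lemma F_zero: "\<sigma> \<in> facets A \<Longrightarrow> x \<in> \<sigma> \<Longrightarrow> facet_form A \<sigma> \<bullet> x = 0"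
  using facet_props(1)[OF finA genA] unfolding Pform_def by blast

lemma F_one: "\<sigma> \<in> facets A \<Longrightarrow> \<exists>z. facet_form A \<sigma> \<bullet> rvec z = 1"
proof -
  assume "\<sigma> \<in> facets A"
  then have "(1::real) \<in> (\<lambda>z. facet_form A \<sigma> \<bullet> rvec z) ` UNIV"
    using facet_props(1)[OF finA genA] unfolding Pform_def by simp
  then show ?thesis by (auto simp del: Ints_1)
qed

lemma conductor:
  assumes sig: "\<sigma> \<in> facets A"
  shows "\<exists>c::int. \<forall>n. n \<ge> c \<longrightarrow> (\<exists>m\<in>monoidN A. facet_form A \<sigma> \<bullet> rvec m = of_int n)"
proof -
  let ?F = "facet_form A \<sigma>"
  obtain z1 where z1: "?F \<bullet> rvec z1 = 1" using F_one[OF sig] by blast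
  obtain n1 n2 where n12: "n1 \<in> monoidN A" "n2 \<in> monoidN A" "z1 = n1 - n2"
    using zspan_split[of z1 A] genA by blast
  obtain si where si: "?F \<bullet> rvec n1 = of_int si" using F_Ints[OF sig] by (meson Ints_cases)
  obtain ti where ti: "?F \<bullet> rvec n2 = of_int ti" using F_Ints[OF sig] by (meson Ints_cases)
  have "of_int si - of_int ti = (1::real)" using z1 n12(3) si ti by (simp add: rvec_diff inner_diff_right)
  then have st: "si = ti + 1" by linarith
  have "ti \<ge> 0" using F_nonneg[OF sig monoidN_cone[OF n12(2)]] ti by simp
  have Fm: "?F \<bullet> rvec (int a *s n2 + int b *s n1) = of_int (int a * ti + int b * si)" for a b
    using si ti by (simp add: rvec_add rvec_smult inner_add_right)
  have mem: "int a *s n2 + int b *s n1 \<in> monoidN A" for a b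
    using n12 by (intro monoidN_add monoidN_mult)
  show ?thesis
  proof (intro exI[of _ "ti * ti"] allI impI)
    fix n :: int assume n: "n \<ge> ti * ti"
    show "\<exists>m\<in>monoidN A. ?F \<bullet> rvec m = of_int n"
    proof (cases "ti = 0")
      case True
      then have "n \<ge> 0" using n by simp
      then show ?thesis using Fm[of 0 "nat n"] mem[of 0 "nat n"] True st by auto
    next
      case False
      then have tpos: "ti > 0" using \<open>ti \<ge> 0\<close> by simp
      define q where "q = n div ti"
      define r where "r = n mod ti"
      have nqr: "n = q * ti + r" unfolding q_def r_def by simp
      have r: "0 \<le> r" "r < ti" unfolding r_def using tpos by auto
      have "q \<ge> ti"
      proof (rule ccontr)
        assume "\<not> q \<ge> ti"
        then have "q \<le> ti - 1" by simp
        then have "q * ti \<le> (ti - 1) * ti" using tpos by (simp add: mult_right_mono)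
        then have "n < ti * ti" using nqr r by (simp add: algebra_simps)
        then show False using n by simp
      qed
      then have qr: "q - r \<ge> 0" using r by simp
      have "int (nat (q - r)) * ti + int (nat r) * si = n"
        using qr r(1) st nqr by (simp add: algebra_simps)
      then show ?thesis using Fm[of "nat (q - r)" "nat r"] mem[of "nat (q - r)" "nat r"] by metis
    qed
  qed
qed

lemma finite_facets: "finite (facets A)"
proof -
  have "facets A \<subseteq> {T. T face_of cone_of A}" unfolding facets_def by blast
  moreover have "finite {T. T face_of cone_of A}"
    by (rule finite_polyhedron_faces[OF cone_of_polyhedron[OF finA]])
  ultimately show ?thesis by (rule finite_subset)
qed

lemma Atau_sub: "Atau A \<tau> \<subseteq> A" unfolding Atau_def by blast

lemma F_vanish_zspan:
  assumes "\<sigma> \<in> facets A" "\<tau> \<subseteq> \<sigma>" "z \<in> zspan (Atau A \<tau>)"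
  shows "facet_form A \<sigma> \<bullet> rvec z = 0"
proof -
  obtain k where z: "z = (\<Sum>b\<in>Atau A \<tau>. k b *s b)" using assms(3) unfolding zspan_def by blast
  have "facet_form A \<sigma> \<bullet> rvec b = 0" if "b \<in> Atau A \<tau>" for b
    using F_zero[OF assms(1)] assms(2) that unfolding Atau_def by blast
  then show ?thesis unfolding z by (simp add: rvec_sum rvec_smult inner_sum_right)
qed

lemma F_vanish_qspan:
  assumes "\<sigma> \<in> facets A" "\<tau> \<subseteq> \<sigma>" "rvec y \<in> qspan (Atau A \<tau>)"
  shows "facet_form A \<sigma> \<bullet> rvec y = 0"
proof -
  obtain q where y: "rvec y = (\<Sum>b\<in>Atau A \<tau>. q b *\<^sub>R rvec b)" using assms(3) unfolding qspan_def by blast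
  have "facet_form A \<sigma> \<bullet> rvec b = 0" if "b \<in> Atau A \<tau>" for b
    using F_zero[OF assms(1)] assms(2) that unfolding Atau_def by blast
  then show ?thesis unfolding y by (simp add: inner_sum_right)
qed

lemma Fc_vanish_cspan:
  assumes "\<sigma> \<in> facets A" "\<tau> \<subseteq> \<sigma>" "l \<in> cspan (Atau A \<tau>)"
  shows "Fc A \<sigma> l = 0"
proof -
  obtain c where l: "l = (\<Sum>b\<in>Atau A \<tau>. c b *s cvec b)" using assms(3) unfolding cspan_def by blast
  have "Fc A \<sigma> (cvec b) = 0" if "b \<in> Atau A \<tau>" for b
  proof -
    have "facet_form A \<sigma> \<bullet> rvec b = 0"
      using F_zero[OF assms(1)] assms(2) that unfolding Atau_def by blast
    then show ?thesis by (simp add: Fc_cvec)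
  qed
  then show ?thesis unfolding l by (simp add: Fc_sum Fc_scale)
qed

lemma key_lemma:
  assumes sc: "scored A" and tau: "\<tau> \<in> faces A"
    and hz: "\<forall>\<sigma>\<in>facets A. \<tau> \<subseteq> \<sigma> \<longrightarrow> Fc A \<sigma> (cvec z) \<in> (\<lambda>a. Fc A \<sigma> (cvec a)) ` monoidN A"
  shows "\<exists>m\<in>monoidN A. \<exists>z'\<in>zspan (Atau A \<tau>). z = m + z'"
proof -
  let ?B = "Atau A \<tau>"
  have finB: "finite ?B" using finA Atau_sub finite_subset by blast
  have tf: "\<tau> face_of cone_of A" "\<tau> \<noteq> {}" using tau unfolding faces_def by auto
  define p where "p = (\<Sum>b\<in>?B. b)"
  have pZ: "p \<in> zspan ?B" unfolding p_def zspan_def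
    by (intro CollectI exI[of _ "\<lambda>_. 1"] conjI) simp_all
  have Fp: "facet_form A \<sigma> \<bullet> rvec p \<ge> 1" if sig: "\<sigma> \<in> facets A" and nt: "\<not> \<tau> \<subseteq> \<sigma>" for \<sigma>
  proof -
    let ?F = "facet_form A \<sigma>"
    obtain x where x: "x \<in> \<tau>" "x \<notin> \<sigma>" using nt by blast
    have xC: "x \<in> cone_of A" using x tf face_of_imp_subset by blast
    have "?F \<bullet> x \<noteq> 0" using facet_props(2)[OF finA genA sig] x xC by blast
    then have Fx: "?F \<bullet> x > 0" using F_nonneg[OF sig xC] by simp
    obtain c where c: "x = (\<Sum>a\<in>A. c a *\<^sub>R rvec a)" "\<forall>a\<in>A. 0 \<le> c a"
      using xC unfolding cone_of_def by blast
    have "\<exists>a\<in>A. c a > 0 \<and> ?F \<bullet> rvec a > 0"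
    proof (rule ccontr)
      assume "\<not> ?thesis"
      then have "c a * (?F \<bullet> rvec a) \<le> 0" if "a \<in> A" for a
        using c(2) that by (metis less_eq_real_def mult_nonneg_nonpos mult_zero_left not_le)
      then have "(\<Sum>a\<in>A. c a * (?F \<bullet> rvec a)) \<le> 0" by (simp add: sum_nonpos)
      moreover have "?F \<bullet> x = (\<Sum>a\<in>A. c a * (?F \<bullet> rvec a))" unfolding c(1) by (simp add: inner_sum_right)
      ultimately show False using Fx by simp
    qed
    then obtain a where a: "a \<in> A" "c a > 0" "?F \<bullet> rvec a > 0" by blast
    have "rvec a \<in> \<tau>" using cone_face_gen[OF finA tf c(2)] x(1) c(1) a by blast
    then have aB: "a \<in> ?B" using a(1) unfolding Atau_def by blast
    have "?F \<bullet> rvec a \<ge> 1"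
    proof -
      obtain ai where "?F \<bullet> rvec a = of_int ai" using F_Ints[OF sig] by (meson Ints_cases)
      then show ?thesis using a(3) by simp
    qed
    also have "?F \<bullet> rvec a \<le> (\<Sum>b\<in>?B. ?F \<bullet> rvec b)"
      using finB aB F_nonneg[OF sig] cone_of_gen[OF finA] Atau_sub
      by (intro member_le_sum) auto
    also have "\<dots> = ?F \<bullet> rvec p" by (simp add: p_def rvec_sum inner_sum_right)
    finally show ?thesis .
  qed
  define fz where "fz \<sigma> = (SOME n::int. facet_form A \<sigma> \<bullet> rvec z = of_int n)" for \<sigma>
  have fz: "facet_form A \<sigma> \<bullet> rvec z = of_int (fz \<sigma>)" if "\<sigma> \<in> facets A" for \<sigma>
  proof -
    have "\<exists>n::int. facet_form A \<sigma> \<bullet> rvec z = of_int n" using F_Ints[OF that] by (meson Ints_cases)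
    then show ?thesis unfolding fz_def by (rule someI_ex)
  qed
  define cd where "cd \<sigma> = (SOME c::int. \<forall>n. n \<ge> c \<longrightarrow> (\<exists>m\<in>monoidN A. facet_form A \<sigma> \<bullet> rvec m = of_int n))" for \<sigma>
  have cd: "\<forall>n. n \<ge> cd \<sigma> \<longrightarrow> (\<exists>m\<in>monoidN A. facet_form A \<sigma> \<bullet> rvec m = of_int n)" if "\<sigma> \<in> facets A" for \<sigma>
    unfolding cd_def by (rule someI_ex[OF conductor[OF that]])
  define N where "N = (\<Sum>\<sigma>\<in>facets A. nat (cd \<sigma> - fz \<sigma>))"
  have Nge: "int N \<ge> cd \<sigma> - fz \<sigma>" if "\<sigma> \<in> facets A" for \<sigma>
  proof -
    have "nat (cd \<sigma> - fz \<sigma>) \<le> N" unfolding N_def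
      using finite_facets that by (intro member_le_sum) auto
    then show ?thesis by linarith
  qed
  define y where "y = int N *s p"
  have yZ: "y \<in> zspan ?B" unfolding y_def using pZ by (rule zspan_smult)
  have "z + y \<in> monoidN A"
  proof -
    have "\<forall>\<sigma>\<in>facets A. Fc A \<sigma> (cvec (z + y)) \<in> (\<lambda>a. Fc A \<sigma> (cvec a)) ` monoidN A"
    proof
      fix \<sigma> assume sig: "\<sigma> \<in> facets A"
      let ?F = "facet_form A \<sigma>"
      show "Fc A \<sigma> (cvec (z + y)) \<in> (\<lambda>a. Fc A \<sigma> (cvec a)) ` monoidN A"
      proof (cases "\<tau> \<subseteq> \<sigma>")
        case True
        have "?F \<bullet> rvec y = 0" using F_vanish_zspan[OF sig True yZ] .
        then have "Fc A \<sigma> (cvec (z + y)) = Fc A \<sigma> (cvec z)"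
          by (simp add: Fc_cvec rvec_add inner_add_right)
        then show ?thesis using hz sig True by simp
      next
        case False
        obtain pi where pi: "?F \<bullet> rvec p = of_int pi" using F_Ints[OF sig] by (meson Ints_cases)
        have "pi \<ge> 1" using Fp[OF sig False] pi by simp
        have val: "?F \<bullet> rvec (z + y) = of_int (fz \<sigma> + int N * pi)"
          using fz[OF sig] pi by (simp add: y_def rvec_add rvec_smult inner_add_right)
        have "fz \<sigma> + int N * pi \<ge> cd \<sigma>"
        proof -
          have "int N * pi \<ge> int N" using \<open>pi \<ge> 1\<close> by (simp add: mult_le_cancel_left1)
          then show ?thesis using Nge[OF sig] by linarith
        qed
        then obtain m where m: "m \<in> monoidN A" "?F \<bullet> rvec m = of_int (fz \<sigma> + int N * pi)"
          using cd[OF sig] by blast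
        have "Fc A \<sigma> (cvec (z + y)) = Fc A \<sigma> (cvec m)" using m(2) val by (simp add: Fc_cvec)
        then show ?thesis using m(1) by blast
      qed
    qed
    then show ?thesis using sc unfolding scored_def by blast
  qed
  moreover have "- y \<in> zspan ?B" using yZ by (rule zspan_minus)
  moreover have "z = (z + y) + (- y)" by simp
  ultimately show ?thesis by blast
qed

end



lemma coset_img:
  "(\<lambda>x. l0 - cvec x) ` ((\<lambda>x. y + x) ` Z) = (\<lambda>x. (l0 - cvec y) + cvec x) ` Z"
  if "\<And>x. x \<in> Z \<Longrightarrow> - x \<in> Z" for Z :: "(int^'d) set"
proof (intro equalityI subsetI)
  fix v assume "v \<in> (\<lambda>x. l0 - cvec x) ` ((\<lambda>x. y + x) ` Z)"
  then obtain x where x: "x \<in> Z" "v = l0 - cvec (y + x)" by blast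
  then have "v = (l0 - cvec y) + cvec (- x)" by (simp add: cvec_add cvec_minus)
  then show "v \<in> (\<lambda>x. (l0 - cvec y) + cvec x) ` Z" using that[OF x(1)] by blast
next
  fix v assume "v \<in> (\<lambda>x. (l0 - cvec y) + cvec x) ` Z"
  then obtain x where x: "x \<in> Z" "v = (l0 - cvec y) + cvec x" by blast
  then have "v = l0 - cvec (y + (- x))" by (simp add: cvec_add cvec_minus cvec_diff)
  then show "v \<in> (\<lambda>x. l0 - cvec x) ` ((\<lambda>x. y + x) ` Z)" using that[OF x(1)] by blast
qed

theorem proposition8p23:
  fixes A :: "(int^'d) set" and \<alpha> :: "complex^'d"
  assumes "finite A" and "zspan A = UNIV" and "scored A"
  shows "extreme A \<alpha>"
proof -
  note finA = assms(1) and genA = assms(2) and sc = assms(3)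
  have part1: "Eset A \<tau> \<alpha> = {}" if tau: "\<tau> \<in> faces A" and nF: "\<tau> \<notin> Face A \<alpha>" for \<tau>
  proof (rule ccontr)
    assume "Eset A \<tau> \<alpha> \<noteq> {}"
    then obtain l m z where l: "l \<in> cspan (Atau A \<tau>)" and m: "m \<in> monoidN A"
      and z: "z \<in> zspan (Atau A \<tau>)" and al: "\<alpha> - l = cvec (m + z)"
      unfolding Eset_def by blast
    have "\<tau> \<in> Face A \<alpha>"
      unfolding Face_def
    proof (intro CollectI conjI ballI impI)
      show "\<tau> \<in> faces A" by fact
      show "\<exists>l\<in>cspan (Atau A \<tau>). \<alpha> - l \<in> range cvec" using l al by blast
      fix \<sigma> assume sig: "\<sigma> \<in> facets A" and ts: "\<tau> \<subseteq> \<sigma>"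
      have "\<alpha> = l + cvec m + cvec z" using al by (simp add: cvec_add algebra_simps)
      then have "Fc A \<sigma> \<alpha> = Fc A \<sigma> l + Fc A \<sigma> (cvec m) + Fc A \<sigma> (cvec z)" by (simp add: Fc_add)
      moreover have "Fc A \<sigma> l = 0" using Fc_vanish_cspan[OF finA genA sig ts l] .
      moreover have "Fc A \<sigma> (cvec z) = 0"
        using F_vanish_zspan[OF finA genA sig ts z] by (simp add: Fc_cvec)
      ultimately have "Fc A \<sigma> \<alpha> = Fc A \<sigma> (cvec m)" by simp
      then show "\<sigma> \<in> Fplus A \<alpha>" unfolding Fplus_def using sig m by blast
    qed
    then show False using nF by blast
  qed
  have part2: "full A \<tau> \<alpha>" if tF: "\<tau> \<in> Face A \<alpha>" for \<tau>
  proof -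
    let ?B = "Atau A \<tau>"
    let ?Z = "zspan ?B"
    have tau: "\<tau> \<in> faces A" using tF unfolding Face_def by blast
    have finB: "finite ?B" by (rule finite_subset[OF Atau_sub[OF finA genA] finA])
    obtain l0 z0 where l0: "l0 \<in> cspan ?B" and z0: "\<alpha> - l0 = cvec z0"
      using tF unfolding Face_def by blast
    have Fp: "\<sigma> \<in> Fplus A \<alpha>" if "\<sigma> \<in> facets A" "\<tau> \<subseteq> \<sigma>" for \<sigma>
      using tF that unfolding Face_def by blast
    have hz0: "Fc A \<sigma> (cvec z0) \<in> (\<lambda>a. Fc A \<sigma> (cvec a)) ` monoidN A"
      if sig: "\<sigma> \<in> facets A" and ts: "\<tau> \<subseteq> \<sigma>" for \<sigma>
    proof -
      have "Fc A \<sigma> (cvec z0) = Fc A \<sigma> \<alpha> - Fc A \<sigma> l0" using z0 by (metis Fc_diff)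
      also have "Fc A \<sigma> l0 = 0" using Fc_vanish_cspan[OF finA genA sig ts l0] .
      finally show ?thesis using Fp[OF sig ts] unfolding Fplus_def by simp
    qed
    define L where "L = {(\<lambda>x. y + x) ` ?Z | y. rvec y \<in> qspan ?B}"
    define \<psi> where "\<psi> K = (\<lambda>x. l0 - cvec x) ` K" for K
    have Zneg: "\<And>x. x \<in> ?Z \<Longrightarrow> - x \<in> ?Z" by (rule zspan_minus)
    have injg: "inj (\<lambda>x. l0 - cvec x)" by (auto intro!: injI simp: cvec_inj)
    have inj\<psi>: "inj_on \<psi> L"
      by (rule inj_onI) (simp add: \<psi>_def inj_image_eq_iff[OF injg])
    have img: "\<psi> ` L = Eset A \<tau> \<alpha>"
    proof (intro equalityI subsetI)
      fix X assume "X \<in> \<psi> ` L"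
      then obtain y where y: "rvec y \<in> qspan ?B" and X: "X = \<psi> ((\<lambda>x. y + x) ` ?Z)"
        unfolding L_def by blast
      have X': "X = (\<lambda>x. (l0 - cvec y) + cvec x) ` ?Z"
        unfolding X \<psi>_def by (rule coset_img[OF Zneg])
      have lc: "l0 - cvec y \<in> cspan ?B" using l0 qspan_cspan[OF y] by (rule cspan_diff)
      have "\<forall>\<sigma>\<in>facets A. \<tau> \<subseteq> \<sigma> \<longrightarrow> Fc A \<sigma> (cvec (z0 + y)) \<in> (\<lambda>a. Fc A \<sigma> (cvec a)) ` monoidN A"
      proof (intro ballI impI)
        fix \<sigma> assume sig: "\<sigma> \<in> facets A" and ts: "\<tau> \<subseteq> \<sigma>"
        have "facet_form A \<sigma> \<bullet> rvec y = 0" using F_vanish_qspan[OF finA genA sig ts y] .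
        then have "Fc A \<sigma> (cvec (z0 + y)) = Fc A \<sigma> (cvec z0)"
          by (simp add: Fc_cvec rvec_add inner_add_right)
        then show "Fc A \<sigma> (cvec (z0 + y)) \<in> (\<lambda>a. Fc A \<sigma> (cvec a)) ` monoidN A"
          using hz0[OF sig ts] by simp
      qed
      then obtain m z' where mz: "m \<in> monoidN A" "z' \<in> ?Z" "z0 + y = m + z'"
        using key_lemma[OF finA genA sc tau] by blast
      have "\<alpha> - (l0 - cvec y) = cvec (z0 + y)" using z0 by (simp add: cvec_add algebra_simps)
      then have "\<alpha> - (l0 - cvec y) \<in> cvec ` {m + z |m z. m \<in> monoidN A \<and> z \<in> ?Z}"
        using mz by blast
      then show "X \<in> Eset A \<tau> \<alpha>" unfolding Eset_def X' using lc by blast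
    next
      fix X assume "X \<in> Eset A \<tau> \<alpha>"
      then obtain l u where X: "X = (\<lambda>x. l + cvec x) ` ?Z" and l: "l \<in> cspan ?B"
        and u: "\<alpha> - l = cvec u"
        unfolding Eset_def by blast
      define y where "y = u - z0"
      have cy: "cvec y = l0 - l" using u z0 unfolding y_def by (simp add: cvec_diff algebra_simps)
      then have "cvec y \<in> cspan ?B" using l0 l by (simp add: cspan_diff)
      then have "rvec y \<in> qspan ?B" using rat_repr[OF finB cspan_real] by blast
      moreover have "l = l0 - cvec y" using cy by simp
      ultimately have "X = \<psi> ((\<lambda>x. y + x) ` ?Z)"
        unfolding X \<psi>_def using coset_img[OF Zneg, of l0 y] by simp
      then show "X \<in> \<psi> ` L" unfolding L_def using \<open>rvec y \<in> qspan ?B\<close> by blast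
    qed
    have "card (Eset A \<tau> \<alpha>) = card L"
      using card_image[OF inj\<psi>] img by simp
    then show ?thesis unfolding full_def lattice_index_def L_def .
  qed
  show ?thesis unfolding extreme_def using part1 part2 by blast
qed


end
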